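(* Let $n\geq 2$. Let $\mu$ denote Shannon entropy on classical states, $\mu(x)=-\sum_{i}x_i\log x_i$, and let $\sigma$ denote von Neumann entropy on quantum states, $\sigma(\rho)=-\mathrm{tr}(\rho\log\rho)$. Then: (i) There is an order embedding $\phi:(\Delta^n,\sqsubseteq)\rightarrow(\Omega^n,\sqsubseteq)$ with $\sigma\circ\phi=\mu$. (ii) For any $m\geq 2$, there is no order embedding $\phi:(\Omega^n,\sqsubseteq)\rightarrow(\Delta^m,\sqsubseteq)$ with $\mu\circ\phi=\sigma$ (here $\mu$ is Shannon entropy on $\Delta^m$).
   Context: Classical states: for $k\geq 2$, $\Delta^k=\{x\in[0,1]^k:\sum_{i=1}^k x_i=1\}$; $e_i$ denotes the pure state with $x_i=1$. The Bayesian order $\sqsubseteq$ on $\Delta^k$ is defined recursively. For $x,y\in\Delta^2$: $x\sqsubseteq y$ iff $(y_1\leq x_1\leq 1/2)$ or $(1/2\leq x_1\leq y_1)$. For $k\geq 2$ and $x,y\in\Delta^{k+1}$: $x\sqsubseteq y$ iff for every $i\in\{1,\ldots,k+1\}$ with $x,y\in\mathrm{dom}(p_i)$ one has $p_i(x)\sqsubseteq p_i(y)$ in $\Delta^k$, where the Bayesian projection $p_i:\Delta^{k+1}\rightharpoonup\Delta^k$ has domain $\Delta^{k+1}\setminus\{e_i\}$ and is given by $p_i(x)=\frac{1}{1-x_i}(x_1,\ldots,x_{i-1},x_{i+1},\ldots,x_{k+1})$. Quantum states: $\Omega^n$ is the set of density operators on an $n$-dimensional complex Hilbert space $\mathcal{H}^n$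 (self-adjoint, positive linear operators of trace $1$). An observable is a self-adjoint operator $e$ on $\mathcal{H}^n$; throughout, observables are assumed to have $\mathrm{spec}(e)=\{1,\ldots,n\}$. For such $e$ and $\rho\in\Omega^n$, $\mathrm{spec}(\rho|e):=(\mathrm{tr}(p_e^1\rho),\ldots,\mathrm{tr}(p_e^n\rho))\in\Delta^n$, where $p_e^\lambda$ is the orthogonal projection onto the eigenspace of $e$ for eigenvalue $\lambda$. The spectral order on $\Omega^n$: $\rho\sqsubseteq\tau$ iff there is an observable $e$ with $[\rho,e]=[\tau,e]=0$ (where $[a,b]=ab-ba$) and $\mathrm{spec}(\rho|e)\sqsubseteq\mathrm{spec}(\tau|e)$ in the Bayesian order on $\Delta^n$. An order embedding $\phi:P\to Q$ between posets is a map with $x\sqsubseteq y\iff \phi(x)\sqsubseteq\phi(y)$ for all $x,y\in P$. Convention $0\log 0=0$. *)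

theory Defs
  imports "HOL-Analysis.Analysis"
begin

text \<open>A classical state in Delta^k is represented as a function nat => real,
  coordinate i (0-based, i < k) standing for x_(i+1); coordinates >= k are 0.\<close>

definition Delta :: "nat \<Rightarrow> (nat \<Rightarrow> real) set" where
  "Delta k = {x. (\<forall>i<k. 0 \<le> x i) \<and> (\<forall>i\<ge>k. x i = 0) \<and> (\<Sum>i<k. x i) = 1}"

definition pure :: "nat \<Rightarrow> (nat \<Rightarrow> real)" where
  "pure i = (\<lambda>j. if j = i then 1 else 0)"

text \<open>Bayesian projection p_i : Delta^(k+1) -> Delta^k (defined off pure i).\<close>
definition bproj :: "nat \<Rightarrow> nat \<Rightarrow> (nat \<Rightarrow> real) \<Rightarrow> (nat \<Rightarrow> real)" where
  "bproj k i x = (\<lambda>j. if j < k then (if j < i then x j else x (Suc j)) / (1 - x i) else 0)"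

fun bayes :: "nat \<Rightarrow> (nat \<Rightarrow> real) \<Rightarrow> (nat \<Rightarrow> real) \<Rightarrow> bool" where
  "bayes (Suc (Suc 0)) x y =
     ((y 0 \<le> x 0 \<and> x 0 \<le> 1/2) \<or> (1/2 \<le> x 0 \<and> x 0 \<le> y 0))"
| "bayes (Suc (Suc (Suc k))) x y =
     (\<forall>i < Suc (Suc (Suc k)).
        x \<in> Delta (Suc (Suc (Suc k))) - {pure i} \<and> y \<in> Delta (Suc (Suc (Suc k))) - {pure i}
        \<longrightarrow> bayes (Suc (Suc k)) (bproj (Suc (Suc k)) i x) (bproj (Suc (Suc k)) i y))"
| "bayes _ x y = False"

definition shannon :: "nat \<Rightarrow> (nat \<Rightarrow> real) \<Rightarrow> real" where
  "shannon k x = - (\<Sum>i<k. x i * ln (x i))"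
  (* note: ln 0 = 0 in Isabelle, so 0 log 0 = 0 *)

definition cinner :: "complex^'n::finite \<Rightarrow> complex^'n \<Rightarrow> complex" where
  "cinner v w = (\<Sum>i\<in>UNIV. cnj (v$i) * w$i)"

definition adj :: "complex^'n::finite^'n \<Rightarrow> complex^'n^'n" where
  "adj A = (\<chi> i j. cnj (A$j$i))"

definition hermitian :: "complex^'n::finite^'n \<Rightarrow> bool" where
  "hermitian A \<longleftrightarrow> adj A = A"

definition density_ops :: "(complex^'n::finite^'n) set" where
  "density_ops = {\<rho>. hermitian \<rho> \<and> (\<forall>v. 0 \<le> Re (cinner v (\<rho> *v v))) \<and> trace \<rho> = 1}"

definition eigenspace :: "complex^'n::finite^'n \<Rightarrow> complex \<Rightarrow> (complex^'n) set" where
  "eigenspace A c = {v. A *v v = c *s v}"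

definition mat_spec :: "complex^'n::finite^'n \<Rightarrow> complex set" where
  "mat_spec A = {c. \<exists>v. v \<noteq> 0 \<and> A *v v = c *s v}"

definition orth_proj_onto :: "(complex^'n::finite) set \<Rightarrow> complex^'n^'n \<Rightarrow> bool" where
  "orth_proj_onto S P \<longleftrightarrow> P ** P = P \<and> adj P = P \<and> range (\<lambda>v. P *v v) = S"

definition proj_onto :: "(complex^'n::finite) set \<Rightarrow> complex^'n^'n" where
  "proj_onto S = (THE P. orth_proj_onto S P)"

definition observable :: "complex^'n::finite^'n \<Rightarrow> bool" where
  "observable e \<longleftrightarrow> hermitian e \<and> mat_spec e = of_nat ` {1..CARD('n)}"

text \<open>spec(rho|e), 0-based: coordinate j is tr(p_e^(j+1) rho).\<close>
definition spec_wrt :: "complex^'n::finite^'n \<Rightarrow> complex^'n^'n \<Rightarrow> (nat \<Rightarrow> real)" where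
  "spec_wrt \<rho> e = (\<lambda>j. if j < CARD('n)
      then Re (trace (proj_onto (eigenspace e (of_nat (Suc j))) ** \<rho>)) else 0)"

definition spectral_le :: "complex^'n::finite^'n \<Rightarrow> complex^'n^'n \<Rightarrow> bool" where
  "spectral_le \<rho> \<tau> \<longleftrightarrow> (\<exists>e. observable e \<and> \<rho> ** e = e ** \<rho> \<and> \<tau> ** e = e ** \<tau>
      \<and> bayes CARD('n) (spec_wrt \<rho> e) (spec_wrt \<tau> e))"

definition mat_fun :: "(real \<Rightarrow> real) \<Rightarrow> complex^'n::finite^'n \<Rightarrow> complex^'n^'n" where
  "mat_fun f A = (\<Sum>c\<in>mat_spec A. f (Re c) *\<^sub>R proj_onto (eigenspace A c))"

definition vn_entropy :: "complex^'n::finite^'n \<Rightarrow> real" where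
  "vn_entropy \<rho> = - Re (trace (mat_fun (\<lambda>t. t * ln t) \<rho>))"

definition order_embedding ::
  "'a set \<Rightarrow> ('a \<Rightarrow> 'a \<Rightarrow> bool) \<Rightarrow> 'b set \<Rightarrow> ('b \<Rightarrow> 'b \<Rightarrow> bool) \<Rightarrow> ('a \<Rightarrow> 'b) \<Rightarrow> bool" where
  "order_embedding P leP Q leQ \<phi> \<longleftrightarrow>
     \<phi> ` P \<subseteq> Q \<and> (\<forall>x\<in>P. \<forall>y\<in>P. leP x y \<longleftrightarrow> leQ (\<phi> x) (\<phi> y))"

end

theory Submission
  imports Defs
begin


definition outer :: "complex^'n::finite \<Rightarrow> complex^'n \<Rightarrow> complex^'n^'n" where
  "outer u w = (\<chi> i j. u$i * cnj (w$j))"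

lemma outer_mult_vec: "outer u w *v v = cinner w v *s u"
  by (simp add: outer_def cinner_def matrix_vector_mult_def vec_eq_iff sum_distrib_left mult_ac)

lemma cinner_scale_right: "cinner v (c *s w) = c * cinner v w"
  by (simp add: cinner_def sum_distrib_left mult_ac)

lemma cinner_scale_left: "cinner (c *s v) w = cnj c * cinner v w"
  by (simp add: cinner_def sum_distrib_left mult_ac)

lemma cinner_add_right: "cinner v (w + z) = cinner v w + cinner v z"
  by (simp add: cinner_def algebra_simps sum.distrib)

lemma cinner_diff_right: "cinner v (w - z) = cinner v w - cinner v z"
  by (simp add: cinner_def algebra_simps sum_subtractf)

lemma cinner_diff_left: "cinner (w - z) v = cinner w v - cinner z v"
  by (simp add: cinner_def algebra_simps sum_subtractf)

lemma cinner_cnj: "cinner w v = cnj (cinner v w)"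
  by (simp add: cinner_def mult.commute)

lemma cinner_self: "cinner v v = complex_of_real (\<Sum>i\<in>UNIV. (cmod (v$i))^2)"
  unfolding cinner_def of_real_sum complex_norm_square
  by (simp add: mult.commute)

lemma cinner_self_eq_0: "cinner v v = 0 \<longleftrightarrow> v = 0"
proof -
  have "(\<Sum>i\<in>UNIV. (cmod (v$i))^2) = 0 \<longleftrightarrow> (\<forall>i. (cmod (v$i))^2 = 0)"
    by (simp add: sum_nonneg_eq_0_iff)
  then show ?thesis unfolding cinner_self of_real_eq_0_iff by (simp add: vec_eq_iff)
qed

lemma inner_cinner: "inner v w = Re (cinner v w)" for v w :: "complex^'n::finite"
  by (simp add: inner_vec_def cinner_def inner_complex_def Re_sum algebra_simps)

lemma hermitian_cinner:
  assumes "hermitian A"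
  shows "cinner (A *v v) w = cinner v (A *v w)"
proof -
  have A: "\<And>i j. cnj (A$i$j) = A$j$i"
    using assms unfolding hermitian_def adj_def by (metis vec_lambda_beta)
  have "cinner (A *v v) w = (\<Sum>i\<in>UNIV. \<Sum>j\<in>UNIV. cnj (A$i$j) * cnj (v$j) * w$i)"
    by (simp add: cinner_def matrix_vector_mult_def sum_distrib_left sum_distrib_right mult_ac)
  also have "\<dots> = (\<Sum>j\<in>UNIV. \<Sum>i\<in>UNIV. cnj (A$i$j) * cnj (v$j) * w$i)"
    by (rule sum.swap)
  also have "\<dots> = cinner v (A *v w)"
    by (simp add: cinner_def matrix_vector_mult_def sum_distrib_left mult_ac A)
  finally show ?thesis .
qed

lemma eig_orth:
  assumes "hermitian A" "A *v v = a *s v" "A *v w = b *s w" "Im a = 0" "Im b = 0" "a \<noteq> b"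
  shows "cinner v w = 0"
proof -
  have "cinner (A *v v) w = cinner v (A *v w)" using assms(1) by (rule hermitian_cinner)
  then have "cnj a * cinner v w = b * cinner v w"
    using assms(2,3) by (simp add: cinner_scale_left cinner_scale_right)
  moreover have "cnj a = a" using assms(4) by (simp add: complex_eq_iff)
  ultimately have "(a - b) * cinner v w = 0" by (simp add: algebra_simps)
  with assms(6) show ?thesis by simp
qed



lemma orth_family_card:
  fixes h :: "'i \<Rightarrow> complex^'n::finite"
  assumes fin: "finite I" and nz: "\<And>a. a \<in> I \<Longrightarrow> h a \<noteq> 0"
    and orth: "\<And>a b. a \<in> I \<Longrightarrow> b \<in> I \<Longrightarrow> a \<noteq> b \<Longrightarrow> cinner (h a) (h b) = 0"
  shows "card I \<le> CARD('n)"
proof -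
  define H where "H = (\<lambda>(a::'i, t::bool). (if t then \<i> else 1) *s h a)"
  have orthH: "inner (H p) (H q) = 0" if p: "p \<in> I \<times> UNIV" and q: "q \<in> I \<times> UNIV" and pq: "p \<noteq> q" for p q
  proof -
    obtain a s where ps: "p = (a,s)" by (cases p)
    obtain b t where qt: "q = (b,t)" by (cases q)
    show "inner (H p) (H q) = 0"
    proof (cases "a = b")
      case True
      then have "s \<noteq> t" using pq ps qt by auto
      define r where "r = (\<Sum>i\<in>UNIV. (cmod (h b$i))^2)"
      have cr: "cinner (h b) (h b) = complex_of_real r" unfolding r_def by (rule cinner_self)
      have "inner (H p) (H q) = Re (cnj (if s then \<i> else 1) * ((if t then \<i> else 1) * complex_of_real r))"
        using qt True unfolding H_def ps by (cases s; cases t) (simp_all add: inner_cinner cinner_scale_left cinner_scale_right cr)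
      also have "\<dots> = 0" using \<open>s \<noteq> t\<close> by (cases s; cases t) simp_all
      finally show ?thesis .
    next
      case False
      then show ?thesis using orth p q
        by (simp add: H_def ps qt inner_cinner cinner_scale_left cinner_scale_right)
    qed
  qed
  have nzH: "H p \<noteq> 0" if "p \<in> I \<times> UNIV" for p
    using nz that by (auto simp: H_def vec_eq_iff split: prod.splits)
  have injH: "inj_on H (I \<times> UNIV)"
  proof (rule inj_onI)
    fix p q assume pq: "p \<in> I \<times> UNIV" "q \<in> I \<times> UNIV" "H p = H q"
    show "p = q"
    proof (rule ccontr)
      assume "p \<noteq> q"
      then have "inner (H p) (H q) = 0" using orthH pq by blast
      then have "inner (H p) (H p) = 0" using pq(3) by simp
      then show False using nzH pq(1) by simp
    qed
  qed
  have "independent (H ` (I \<times> UNIV))"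
  proof (rule pairwise_orthogonal_independent)
    show "pairwise orthogonal (H ` (I \<times> UNIV))"
    proof (unfold pairwise_def, intro ballI impI)
      fix x y assume "x \<in> H ` (I \<times> UNIV)" "y \<in> H ` (I \<times> UNIV)" "x \<noteq> y"
      then obtain p q where "p \<in> I \<times> UNIV" "q \<in> I \<times> UNIV" "x = H p" "y = H q" "p \<noteq> q"
        by blast
      then show "orthogonal x y" unfolding orthogonal_def using orthH by blast
    qed
    show "0 \<notin> H ` (I \<times> UNIV)" using nzH by (metis imageE)
  qed
  then have "card (H ` (I \<times> UNIV)) \<le> DIM(complex^'n)" by (rule independent_bound[THEN conjunct2])
  then have "card (I \<times> (UNIV::bool set)) \<le> CARD('n) * 2" using card_image[OF injH] by simp
  then show ?thesis by (simp add: card_cartesian_product)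
qed

lemma obs_eig_val:
  fixes e :: "complex^'n::finite^'n"
  assumes "observable e" "v \<noteq> 0" "e *v v = c *s v"
  shows "\<exists>k. k \<in> {1..CARD('n)} \<and> c = of_nat k"
proof -
  have "c \<in> mat_spec e" using assms(2,3) unfolding mat_spec_def by blast
  then show ?thesis using assms(1) unfolding observable_def by auto
qed

lemma obs_eigvecs:
  fixes e :: "complex^'n::finite^'n"
  assumes "observable e" "j \<in> {1..CARD('n)}"
  shows "\<exists>v. v \<noteq> 0 \<and> e *v v = of_nat j *s v"
proof -
  have "of_nat j \<in> mat_spec e" using assms unfolding observable_def by auto
  then show ?thesis unfolding mat_spec_def by blast
qed

lemma obs_eig_simple:
  fixes e :: "complex^'n::finite^'n"
  assumes obs: "observable e" and x: "x \<noteq> 0" "e *v x = c *s x" and y: "e *v y = c *s y"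
  shows "\<exists>t. y = t *s x"
proof (rule ccontr)
  assume np: "\<nexists>t. y = t *s x"
  obtain k where k: "k \<in> {1..CARD('n)}" "c = of_nat k" using obs_eig_val[OF obs x] by blast
  have herm: "hermitian e" using obs by (simp add: observable_def)
  define y' where "y' = y - (cinner x y / cinner x x) *s x"
  have y'nz: "y' \<noteq> 0"
  proof
    assume "y' = 0"
    then have "y = (cinner x y / cinner x x) *s x" unfolding y'_def by simp
    then show False using np by blast
  qed
  have ey': "e *v y' = c *s y'"
    by (simp add: y'_def matrix_vector_mult_diff_distrib vector_scalar_commute x y algebra_simps)
  have xx: "cinner x x \<noteq> 0" using x(1) cinner_self_eq_0 by blast
  have xy': "cinner x y' = 0" using xx by (simp add: y'_def cinner_diff_right cinner_scale_right)
  have "\<forall>j. \<exists>v. j \<in> {1..CARD('n)} \<longrightarrow> v \<noteq> 0 \<and> e *v v = of_nat j *s v"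
    using obs_eigvecs[OF obs] by blast
  then obtain V where V: "\<And>j. j \<in> {1..CARD('n)} \<Longrightarrow> V j \<noteq> 0 \<and> e *v V j = of_nat j *s V j"
    using choice[of "\<lambda>j v. j \<in> {1..CARD('n)} \<longrightarrow> v \<noteq> 0 \<and> e *v v = of_nat j *s v"] by blast
  define h where "h j = (if j = 0 then y' else if j = k then x else V j)" for j
  define ev where "ev j = (if j = 0 then k else j)" for j
  have hev: "h j \<noteq> 0 \<and> e *v h j = of_nat (ev j) *s h j" if "j \<in> {0..CARD('n)}" for j
    using that V[of j] y'nz ey' x k by (auto simp: h_def ev_def)
  have "card {0..CARD('n)} \<le> CARD('n)"
  proof (rule orth_family_card[where h = h])
    show "finite {0..CARD('n)}" by simp
    show "h a \<noteq> 0" if "a \<in> {0..CARD('n)}" for a using hev[OF that] by blast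
    show "cinner (h a) (h b) = 0" if ab: "a \<in> {0..CARD('n)}" "b \<in> {0..CARD('n)}" "a \<noteq> b" for a b
    proof (cases "ev a = ev b")
      case False
      show ?thesis
        by (rule eig_orth[OF herm hev[OF ab(1), THEN conjunct2] hev[OF ab(2), THEN conjunct2]])
           (simp_all add: False)
    next
      case True
      then have "(a = 0 \<and> b = k) \<or> (a = k \<and> b = 0)" using ab k(1) by (cases "a = 0"; cases "b = 0") (auto simp: ev_def)
      then show ?thesis
      proof
        assume "a = 0 \<and> b = k"
        then show ?thesis using k(1) xy' by (simp add: h_def cinner_cnj[of y' x])
      next
        assume "a = k \<and> b = 0"
        then show ?thesis using k(1) xy' by (simp add: h_def)
      qed
    qed
  qed
  then show False by simp
qed



lemma adj_mult: "adj (A ** B) = adj B ** adj (A::complex^'n::finite^'n)"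
  by (simp add: adj_def matrix_matrix_mult_def vec_eq_iff mult.commute)

lemma adj_outer: "adj (outer a b) = outer b a"
  by (simp add: adj_def outer_def vec_eq_iff)

lemma outer_mult: "outer a b ** outer c d = outer (cinner b c *s a) d"
  by (simp add: outer_def matrix_matrix_mult_def vec_eq_iff cinner_def sum_distrib_left sum_distrib_right mult_ac)

lemma trace_outer_mult: "trace (outer w w ** A) = cinner w (A *v w)"
proof -
  have "trace (outer w w ** A) = (\<Sum>i\<in>UNIV. \<Sum>k\<in>UNIV. w$i * cnj (w$k) * A$k$i)"
    by (simp add: trace_def outer_def matrix_matrix_mult_def)
  also have "\<dots> = (\<Sum>k\<in>UNIV. \<Sum>i\<in>UNIV. w$i * cnj (w$k) * A$k$i)" by (rule sum.swap)
  also have "\<dots> = cinner w (A *v w)"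
    by (simp add: cinner_def matrix_vector_mult_def sum_distrib_left mult_ac)
  finally show ?thesis .
qed

lemma orth_proj_QP:
  assumes P: "orth_proj_onto S P" and Q: "orth_proj_onto S Q"
  shows "Q ** P = P"
proof -
  have "(Q ** P) *v v = P *v v" for v
  proof -
    have "P *v v \<in> range (\<lambda>v. Q *v v)" using P Q unfolding orth_proj_onto_def by auto
    then obtain z where z: "P *v v = Q *v z" by auto
    have "(Q ** P) *v v = Q *v (Q *v z)" by (simp add: matrix_vector_mul_assoc[symmetric] z)
    also have "\<dots> = (Q ** Q) *v z" by (simp add: matrix_vector_mul_assoc)
    also have "\<dots> = P *v v" using Q z unfolding orth_proj_onto_def by simp
    finally show ?thesis .
  qed
  then show ?thesis by (simp add: matrix_eq)
qed

lemma orth_proj_unique: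
  assumes P: "orth_proj_onto S P" and Q: "orth_proj_onto S Q"
  shows "P = Q"
proof -
  have "P = adj P" using P by (simp add: orth_proj_onto_def)
  also have "\<dots> = adj (Q ** P)" using orth_proj_QP[OF P Q] by simp
  also have "\<dots> = adj P ** adj Q" by (rule adj_mult)
  also have "\<dots> = P ** Q" using P Q by (simp add: orth_proj_onto_def)
  also have "\<dots> = Q" by (rule orth_proj_QP[OF Q P])
  finally show ?thesis .
qed

lemma proj_onto_eq: "orth_proj_onto S P \<Longrightarrow> proj_onto S = P"
  unfolding proj_onto_def using orth_proj_unique by blast

lemma cinner_unit_nz: "cinner w w = 1 \<Longrightarrow> w \<noteq> 0"
  using cinner_self_eq_0[of w] by auto

lemma spec_wrt_eig:
  fixes e :: "complex^'n::finite^'n"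
  assumes obs: "observable e" and w: "cinner w w = 1"
    and ew: "e *v w = of_nat (Suc j) *s w" and j: "j < CARD('n)"
  shows "spec_wrt \<rho> e j = Re (cinner w (\<rho> *v w))"
proof -
  have wnz: "w \<noteq> 0" using w by (rule cinner_unit_nz)
  have ES: "eigenspace e (of_nat (Suc j)) = range (\<lambda>t. t *s w)"
  proof
    show "eigenspace e (of_nat (Suc j)) \<subseteq> range (\<lambda>t. t *s w)"
      using obs_eig_simple[OF obs wnz ew] unfolding eigenspace_def by blast
    show "range (\<lambda>t. t *s w) \<subseteq> eigenspace e (of_nat (Suc j))"
      unfolding eigenspace_def by (auto simp: vector_scalar_commute ew)
  qed
  have rng: "range (\<lambda>v. outer w w *v v) = range (\<lambda>t. t *s w)"
  proof
    show "range (\<lambda>v. outer w w *v v) \<subseteq> range (\<lambda>t. t *s w)"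
      by (auto simp: outer_mult_vec)
    show "range (\<lambda>t. t *s w) \<subseteq> range (\<lambda>v. outer w w *v v)"
    proof
      fix z assume "z \<in> range (\<lambda>t. t *s w)"
      then obtain t where z: "z = t *s w" by auto
      have "outer w w *v z = z" by (simp add: z outer_mult_vec cinner_scale_right w)
      then show "z \<in> range (\<lambda>v. outer w w *v v)" by (metis rangeI)
    qed
  qed
  have "orth_proj_onto (eigenspace e (of_nat (Suc j))) (outer w w)"
    unfolding orth_proj_onto_def ES rng by (simp add: outer_mult w adj_outer)
  then have "proj_onto (eigenspace e (of_nat (Suc j))) = outer w w" by (rule proj_onto_eq)
  then show ?thesis using j by (simp add: spec_wrt_def trace_outer_mult)
qed



lemma bayes_refl: "bayes (Suc (Suc k)) x x"
proof (induction k arbitrary: x)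
  case 0
  then show ?case by (simp add: numeral_2_eq_2) linarith
next
  case (Suc k)
  then show ?case by simp
qed

lemma outer_idem: "cinner u u = 1 \<Longrightarrow> outer u u ** outer u u = outer u u"
  by (simp add: outer_mult)

lemma pure_density:
  assumes u: "cinner u u = 1"
  shows "outer u u \<in> density_ops"
proof -
  have "hermitian (outer u u)" by (simp add: hermitian_def adj_outer)
  moreover have "0 \<le> Re (cinner v (outer u u *v v))" for v
  proof -
    have "cinner v (outer u u *v v) = cinner u v * cnj (cinner u v)"
      by (simp add: outer_mult_vec cinner_scale_right cinner_cnj[of v u])
    also have "\<dots> = complex_of_real ((cmod (cinner u v))^2)" by (rule complex_norm_square[symmetric])
    finally show ?thesis by simp
  qed
  moreover have "trace (outer u u) = 1"
  proof -
    have "trace (outer u u) = cinner u u" by (simp add: trace_def outer_def cinner_def mult.commute)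
    then show ?thesis using u by simp
  qed
  ultimately show ?thesis unfolding density_ops_def by blast
qed

lemma pure_spec:
  assumes u: "cinner u u = 1" and c: "c \<in> mat_spec (outer u u)"
  shows "c = 0 \<or> c = 1"
proof -
  obtain v where v: "v \<noteq> 0" "outer u u *v v = c *s v" using c unfolding mat_spec_def by blast
  have "outer u u *v (outer u u *v v) = (outer u u ** outer u u) *v v" by (simp add: matrix_vector_mul_assoc)
  then have "c *s (c *s v) = c *s v" using v(2) outer_idem[OF u] by (simp add: vector_scalar_commute)
  then have "(c * c - c) *s v = 0" by (simp add: algebra_simps)
  then have "c * c - c = 0" using v(1) by (simp add: vec_eq_iff) (metis vec_eq_iff zero_index)
  then have "c * (c - 1) = 0" by (simp add: algebra_simps)
  then show ?thesis by simp
qed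

lemma pure_entropy:
  assumes u: "cinner u u = 1"
  shows "vn_entropy (outer u u) = 0"
proof -
  have "mat_fun (\<lambda>t. t * ln t) (outer u u) = 0"
    unfolding mat_fun_def
  proof (rule sum.neutral, intro ballI)
    fix c assume "c \<in> mat_spec (outer u u)"
    then have "c = 0 \<or> c = 1" using pure_spec[OF u] by blast
    then show "(Re c * ln (Re c)) *\<^sub>R proj_onto (eigenspace (outer u u) c) = 0" by auto
  qed
  then show ?thesis unfolding vn_entropy_def by (simp add: trace_def)
qed

lemma commute_eig:
  assumes u: "cinner u u = 1" and c: "outer u u ** e = e ** outer u u"
  shows "e *v u = cinner u (e *v u) *s u"
proof -
  have "(outer u u ** e) *v u = cinner u (e *v u) *s u"
    by (simp add: matrix_vector_mul_assoc[symmetric] outer_mult_vec)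
  moreover have "(e ** outer u u) *v u = e *v u"
    by (simp add: matrix_vector_mul_assoc[symmetric] outer_mult_vec u)
  ultimately show ?thesis using c by simp
qed

lemma pure_incomparable:
  fixes u w :: "complex^'n::finite"
  assumes u: "cinner u u = 1" and w: "cinner w w = 1" and uw: "cinner u w \<noteq> 0"
    and np: "\<nexists>t. w = t *s u"
  shows "\<not> spectral_le (outer u u) (outer w w)"
proof
  assume "spectral_le (outer u u) (outer w w)"
  then obtain e where obs: "observable e" and c1: "outer u u ** e = e ** outer u u"
    and c2: "outer w w ** e = e ** outer w w"
    unfolding spectral_le_def by metis
  have herm: "hermitian e" using obs by (simp add: observable_def)
  have unz: "u \<noteq> 0" and wnz: "w \<noteq> 0" using u w by (simp_all add: cinner_unit_nz)
  have eu: "e *v u = cinner u (e *v u) *s u" by (rule commute_eig[OF u c1])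
  have ew: "e *v w = cinner w (e *v w) *s w" by (rule commute_eig[OF w c2])
  obtain k where k: "cinner u (e *v u) = of_nat k" using obs_eig_val[OF obs unz eu] by blast
  obtain l where l: "cinner w (e *v w) = of_nat l" using obs_eig_val[OF obs wnz ew] by blast
  show False
  proof (cases "k = l")
    case True
    then have "\<exists>t. w = t *s u" using obs_eig_simple[OF obs unz eu] ew k l by simp
    with np show False by blast
  next
    case False
    have "cinner u w = 0"
      by (rule eig_orth[OF herm eu ew]) (simp_all add: k l False)
    with uw show False by blast
  qed
qed

lemma shannon_zero_pure:
  assumes x: "x \<in> Delta m" and sh: "shannon m x = 0" and i: "i < m"
  shows "x i = 0 \<or> x i = 1"
proof -
  have nn: "\<And>j. j < m \<Longrightarrow> 0 \<le> x j" using x by (simp add: Delta_def)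
  have s1: "(\<Sum>j<m. x j) = 1" using x by (simp add: Delta_def)
  have le1: "x j \<le> 1" if "j < m" for j
  proof -
    have "x j \<le> (\<Sum>j<m. x j)" by (rule member_le_sum) (use that nn in auto)
    then show ?thesis using s1 by simp
  qed
  have tnn: "0 \<le> - (x j * ln (x j))" if "j < m" for j
  proof (cases "x j = 0")
    case False
    then have "0 < x j" using nn[OF that] by simp
    then have "ln (x j) \<le> 0" using le1[OF that] by simp
    then show ?thesis using nn[OF that] by (simp add: mult_nonneg_nonpos)
  qed simp
  have "(\<Sum>j<m. - (x j * ln (x j))) = 0" using sh by (simp add: shannon_def sum_negf)
  then have "\<forall>j\<in>{..<m}. - (x j * ln (x j)) = 0"
    by (subst sum_nonneg_eq_0_iff[symmetric]) (use tnn in auto)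
  then have "x i * ln (x i) = 0" using i by auto
  then have "x i = 0 \<or> ln (x i) = 0" by simp
  then show ?thesis using nn[OF i] ln_eq_zero_iff[of "x i"] by (cases "x i = 0") auto
qed

lemma finite_Z: "finite {x::nat\<Rightarrow>real. \<forall>i. (i < m \<longrightarrow> x i = 0 \<or> x i = 1) \<and> (m \<le> i \<longrightarrow> x i = 0)}"
proof (rule finite_subset)
  show "{x::nat\<Rightarrow>real. \<forall>i. (i < m \<longrightarrow> x i = 0 \<or> x i = 1) \<and> (m \<le> i \<longrightarrow> x i = 0)}
      \<subseteq> (\<lambda>S i. if i \<in> S then 1 else 0) ` Pow {..<m}"
  proof
    fix x :: "nat \<Rightarrow> real" assume "x \<in> {x. \<forall>i. (i < m \<longrightarrow> x i = 0 \<or> x i = 1) \<and> (m \<le> i \<longrightarrow> x i = 0)}"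
    then have hx: "\<And>i. (i < m \<longrightarrow> x i = 0 \<or> x i = 1) \<and> (m \<le> i \<longrightarrow> x i = 0)" by blast
    have "x = (\<lambda>i. if i \<in> {i. i < m \<and> x i = 1} then 1 else 0)"
    proof
      fix i show "x i = (if i \<in> {i. i < m \<and> x i = 1} then 1 else 0)"
        using hx[of i] by (cases "i < m") auto
    qed
    then show "x \<in> (\<lambda>S i. if i \<in> S then 1 else 0) ` Pow {..<m}" by blast
  qed
qed simp

lemma cinner_two:
  fixes u v :: "complex^'n::finite"
  assumes ab: "a \<noteq> b" and u: "\<And>i. i \<noteq> a \<Longrightarrow> i \<noteq> b \<Longrightarrow> u$i = 0"
  shows "cinner u v = cnj (u$a) * v$a + cnj (u$b) * v$b"
proof -
  have "cinner u v = (\<Sum>i\<in>{a,b}. cnj (u$i) * v$i)"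
    unfolding cinner_def by (rule sum.mono_neutral_right) (auto simp: u)
  then show ?thesis using ab by simp
qed

lemma part2:
  fixes \<phi> :: "complex^'n::finite^'n \<Rightarrow> nat \<Rightarrow> real"
  assumes n: "CARD('n) \<ge> 2" and m: "m \<ge> 2"
    and emb: "order_embedding density_ops spectral_le (Delta m) (bayes m) \<phi>"
    and ent: "\<forall>\<rho>\<in>density_ops. shannon m (\<phi> \<rho>) = vn_entropy \<rho>"
  shows False
proof -
  obtain a b :: 'n where ab: "a \<noteq> b"
  proof -
    obtain a :: 'n where True by blast
    have "\<exists>b::'n. b \<noteq> a"
    proof (rule ccontr)
      assume "\<nexists>b::'n. b \<noteq> a"
      then have "(UNIV::'n set) = {a}" by blast
      then have "card (UNIV::'n set) = card {a}" by (rule arg_cong)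
      then show False using n by simp
    qed
    then show ?thesis using that by blast
  qed
  define r where "r t = 1 / sqrt (1 + (real t)^2)" for t :: nat
  define U where "U t = (\<chi> i. if i = a then complex_of_real (r t)
     else if i = b then complex_of_real (real t * r t) else 0)" for t
  define \<rho> where "\<rho> t = outer (U t) (U t)" for t
  have rpos: "r t > 0" for t unfolding r_def by (simp add: add_pos_nonneg)
  have r2: "r t * r t * (1 + real t * real t) = 1" for t
  proof -
    have "sqrt (1 + (real t)^2) * sqrt (1 + (real t)^2) = 1 + real t * real t"
      by (simp add: power2_eq_square add_nonneg_nonneg)
    moreover have "1 + real t * real t > 0" by (simp add: add_pos_nonneg)
    ultimately show ?thesis unfolding r_def by (simp add: field_simps)
  qed
  have Uz: "\<And>i. i \<noteq> a \<Longrightarrow> i \<noteq> b \<Longrightarrow> U t $ i = 0" for t by (simp add: U_def)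
  have Uin: "cinner (U s) (U t) = complex_of_real (r s * r t * (1 + real s * real t))" for s t
    by (subst cinner_two[OF ab Uz]) (auto simp: U_def ab[symmetric] algebra_simps)
  have Uunit: "cinner (U t) (U t) = 1" for t using r2[of t] by (simp add: Uin)
  have Unp: "\<nexists>c. U t = c *s U s" if st: "s \<noteq> t" for s t
  proof
    assume "\<exists>c. U t = c *s U s"
    then obtain c where c: "U t = c *s U s" by blast
    have ca: "complex_of_real (r t) = c * complex_of_real (r s)"
      using arg_cong[OF c, of "\<lambda>v. v$a"] by (simp add: U_def)
    have cb: "complex_of_real (real t * r t) = c * complex_of_real (real s * r s)"
      using arg_cong[OF c, of "\<lambda>v. v$b"] ab by (simp add: U_def)
    then have "of_nat t * complex_of_real (r t) = of_nat s * (c * complex_of_real (r s))"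
      by (simp add: algebra_simps)
    then have "of_nat t * complex_of_real (r t) = of_nat s * complex_of_real (r t)" using ca by simp
    then have "(complex_of_nat t) = of_nat s" using rpos[of t] by simp
    then show False using st by simp
  qed
  have Uinnz: "cinner (U s) (U t) \<noteq> 0" for s t
  proof -
    have "1 + real s * real t > 0" by (simp add: add_pos_nonneg)
    then have "r s * r t * (1 + real s * real t) \<noteq> 0" using rpos[of s] rpos[of t] by simp
    then show ?thesis unfolding Uin of_real_eq_0_iff .
  qed
  have inc: "\<not> spectral_le (\<rho> s) (\<rho> t)" if "s \<noteq> t" for s t
    unfolding \<rho>_def by (rule pure_incomparable[OF Uunit Uunit Uinnz Unp[OF that]])
  have dens: "\<rho> t \<in> density_ops" for t unfolding \<rho>_def by (rule pure_density[OF Uunit])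
  have ent0: "vn_entropy (\<rho> t) = 0" for t unfolding \<rho>_def by (rule pure_entropy[OF Uunit])
  have inD: "\<phi> (\<rho> t) \<in> Delta m" for t using emb dens[of t] unfolding order_embedding_def by blast
  define Z where "Z = {x::nat\<Rightarrow>real. \<forall>i. (i < m \<longrightarrow> x i = 0 \<or> x i = 1) \<and> (m \<le> i \<longrightarrow> x i = 0)}"
  have inZ: "\<phi> (\<rho> t) \<in> Z" for t
  proof -
    have sh: "shannon m (\<phi> (\<rho> t)) = 0" using ent dens[of t] ent0[of t] by simp
    show ?thesis unfolding Z_def
      using shannon_zero_pure[OF inD sh] inD[of t] by (auto simp: Delta_def)
  qed
  have inj: "inj (\<lambda>t. \<phi> (\<rho> t))"
  proof (rule injI, rule ccontr)
    fix s t assume eq: "\<phi> (\<rho> s) = \<phi> (\<rho> t)" and st: "s \<noteq> t"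
    obtain k where mk: "m = Suc (Suc k)" using m by (metis add_2_eq_Suc le_Suc_ex)
    have "bayes m (\<phi> (\<rho> s)) (\<phi> (\<rho> t))" using eq mk bayes_refl by simp
    then have "spectral_le (\<rho> s) (\<rho> t)" using emb dens unfolding order_embedding_def by blast
    with inc[OF st] show False by blast
  qed
  have "finite (range (\<lambda>t. \<phi> (\<rho> t)))"
    by (rule finite_subset[OF _ finite_Z[of m]]) (use inZ Z_def in blast)
  then have "finite (UNIV::nat set)" using inj finite_imageD by blast
  then show False by simp
qed



definition skip :: "nat \<Rightarrow> nat \<Rightarrow> nat" where
  "skip i j = (if j < i then j else Suc j)"

definition unskip :: "nat \<Rightarrow> nat \<Rightarrow> nat" where
  "unskip c l = (if l < c then l else l - 1)"

lemma bproj_skip: "bproj k i x = (\<lambda>j. if j < k then x (skip i j) / (1 - x i) else 0)"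
  by (simp add: bproj_def skip_def fun_eq_iff)

lemma skip_neq: "skip i j \<noteq> i" by (simp add: skip_def)

lemma skip_inj: "skip i j1 = skip i j2 \<Longrightarrow> j1 = j2"
  by (auto simp: skip_def split: if_splits)

lemma skip_unskip: "m \<noteq> c \<Longrightarrow> skip c (unskip c m) = m"
  by (auto simp: skip_def unskip_def)

lemma skip_image: "i < Suc k \<Longrightarrow> skip i ` {..<k} = {..<Suc k} - {i}"
proof
  assume i: "i < Suc k"
  show "skip i ` {..<k} \<subseteq> {..<Suc k} - {i}" by (auto simp: skip_def)
  show "{..<Suc k} - {i} \<subseteq> skip i ` {..<k}"
  proof
    fix l assume l: "l \<in> {..<Suc k} - {i}"
    show "l \<in> skip i ` {..<k}"
    proof (cases "l < i")
      case True
      then have "skip i l = l" "l < k" using i by (auto simp: skip_def)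
      then show ?thesis by (metis image_eqI lessThan_iff)
    next
      case False
      then have "l > i" using l by auto
      then have "skip i (l - 1) = l" "l - 1 < k" using l by (auto simp: skip_def)
      then show ?thesis by (metis image_eqI lessThan_iff)
    qed
  qed
qed

lemma Delta_le1: "x \<in> Delta k \<Longrightarrow> x i \<le> 1"
proof -
  assume x: "x \<in> Delta k"
  show "x i \<le> 1"
  proof (cases "i < k")
    case True
    have "x i \<le> (\<Sum>j<k. x j)" by (rule member_le_sum) (use True x in \<open>auto simp: Delta_def\<close>)
    then show ?thesis using x by (simp add: Delta_def)
  next
    case False then show ?thesis using x by (simp add: Delta_def)
  qed
qed

lemma Delta_pure: "x \<in> Delta k \<Longrightarrow> i < k \<Longrightarrow> x = pure i \<longleftrightarrow> x i = 1"
proof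
  assume x: "x \<in> Delta k" and i: "i < k"
  show "x = pure i \<Longrightarrow> x i = 1" by (simp add: pure_def)
  assume xi: "x i = 1"
  have "(\<Sum>j<k. x j) = x i + (\<Sum>j\<in>{..<k} - {i}. x j)"
    using i by (subst sum.remove[of _ i]) auto
  then have "(\<Sum>j\<in>{..<k} - {i}. x j) = 0" using x xi by (simp add: Delta_def)
  then have z: "\<forall>j\<in>{..<k} - {i}. x j = 0"
    by (subst sum_nonneg_eq_0_iff[symmetric]) (use x in \<open>auto simp: Delta_def\<close>)
  show "x = pure i"
  proof
    fix j show "x j = pure i j"
      using z xi x by (cases "j < k") (auto simp: pure_def Delta_def)
  qed
qed

lemma Delta_perm:
  assumes s: "\<sigma> permutes {..<k}" and x: "x \<in> Delta k"
  shows "x \<circ> \<sigma> \<in> Delta k"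
proof -
  have "(\<Sum>j<k. (x \<circ> \<sigma>) j) = (\<Sum>j<k. x j)" using sum.permute[OF s, of x] by simp
  moreover have "0 \<le> x (\<sigma> j)" if "j < k" for j
    using x permutes_in_image[OF s, of j] that by (simp add: Delta_def)
  moreover have "x (\<sigma> j) = 0" if "k \<le> j" for j
    using x permutes_not_in[OF s, of j] that by (simp add: Delta_def)
  ultimately show ?thesis using x by (simp add: Delta_def)
qed

lemma bproj_Delta:
  assumes x: "x \<in> Delta (Suc k)" and i: "i < Suc k" and xi: "x i \<noteq> 1"
  shows "bproj k i x \<in> Delta k"
proof -
  have lt: "x i < 1" using Delta_le1[OF x, of i] xi by simp
  have "(\<Sum>j<k. x (skip i j)) = (\<Sum>l\<in>skip i ` {..<k}. x l)"
    by (rule sum.reindex[symmetric, unfolded comp_def]) (auto intro: inj_onI skip_inj)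
  also have "\<dots> = (\<Sum>l\<in>{..<Suc k} - {i}. x l)" using skip_image[OF i] by simp
  also have "\<dots> = (\<Sum>l<Suc k. x l) - x i" using i by (subst sum_diff1) auto
  also have "\<dots> = 1 - x i" using x by (simp add: Delta_def)
  finally have s: "(\<Sum>j<k. x (skip i j)) = 1 - x i" .
  have "(\<Sum>j<k. bproj k i x j) = (\<Sum>j<k. x (skip i j)) / (1 - x i)"
    by (simp add: bproj_skip sum_divide_distrib)
  also have "\<dots> = 1" using s lt by simp
  finally have "(\<Sum>j<k. bproj k i x j) = 1" .
  moreover have "0 \<le> bproj k i x j" for j
  proof -
    have "skip i j < Suc k \<or> j \<ge> k" by (auto simp: skip_def)
    then show ?thesis using x lt by (auto simp: bproj_skip Delta_def)
  qed
  moreover have "bproj k i x j = 0" if "k \<le> j" for j using that by (simp add: bproj_skip)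
  ultimately show ?thesis unfolding Delta_def by blast
qed

definition tau :: "nat \<Rightarrow> (nat \<Rightarrow> nat) \<Rightarrow> nat \<Rightarrow> nat \<Rightarrow> nat" where
  "tau k \<sigma> i = (\<lambda>j. if j < k then unskip (\<sigma> i) (\<sigma> (skip i j)) else j)"

lemma tau_perm:
  assumes s: "\<sigma> permutes {..<Suc k}" and i: "i < Suc k"
  shows "tau k \<sigma> i permutes {..<k}"
proof -
  have neq: "\<sigma> (skip i j) \<noteq> \<sigma> i" for j
    using permutes_inj[OF s] skip_neq by (metis injD)
  have skt: "skip (\<sigma> i) (tau k \<sigma> i j) = \<sigma> (skip i j)" if "j < k" for j
    using that neq by (simp add: tau_def skip_unskip)
  have inj: "inj_on (tau k \<sigma> i) {..<k}"
  proof (rule inj_onI)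
    fix j1 j2 assume j: "j1 \<in> {..<k}" "j2 \<in> {..<k}" "tau k \<sigma> i j1 = tau k \<sigma> i j2"
    then have "\<sigma> (skip i j1) = \<sigma> (skip i j2)" using skt by (metis lessThan_iff)
    then have "skip i j1 = skip i j2" using permutes_inj[OF s] by (metis injD)
    then show "j1 = j2" by (rule skip_inj)
  qed
  have into: "tau k \<sigma> i ` {..<k} \<subseteq> {..<k}"
  proof
    fix l assume "l \<in> tau k \<sigma> i ` {..<k}"
    then obtain j where j: "j < k" "l = tau k \<sigma> i j" by auto
    have "skip i j < Suc k" using j(1) by (auto simp: skip_def)
    then have m: "\<sigma> (skip i j) < Suc k" using permutes_in_image[OF s] by simp
    have si: "\<sigma> i < Suc k" using permutes_in_image[OF s] i by simp
    show "l \<in> {..<k}" using j m si neq[of j] by (auto simp: tau_def unskip_def)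
  qed
  have "tau k \<sigma> i ` {..<k} = {..<k}" by (rule endo_inj_surj[OF _ into inj]) simp
  then have "bij_betw (tau k \<sigma> i) {..<k} {..<k}" using inj by (simp add: bij_betw_def)
  then show ?thesis by (rule bij_imp_permutes) (simp add: tau_def)
qed

lemma bproj_perm:
  assumes s: "\<sigma> permutes {..<Suc k}" and i: "i < Suc k"
  shows "bproj k i (x \<circ> \<sigma>) = bproj k (\<sigma> i) x \<circ> tau k \<sigma> i"
proof
  fix j
  have neq: "\<sigma> (skip i j) \<noteq> \<sigma> i"
    using permutes_inj[OF s] skip_neq by (metis injD)
  show "bproj k i (x \<circ> \<sigma>) j = (bproj k (\<sigma> i) x \<circ> tau k \<sigma> i) j"
  proof (cases "j < k")
    case True
    have tk: "tau k \<sigma> i j < k"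
      using permutes_in_image[OF tau_perm[OF s i], of j] True by simp
    show ?thesis using True tk neq by (simp add: bproj_skip tau_def skip_unskip)
  next
    case False
    then show ?thesis by (simp add: bproj_skip tau_def)
  qed
qed

lemma bayes_perm:
  "\<sigma> permutes {..<Suc (Suc k)} \<Longrightarrow> x \<in> Delta (Suc (Suc k)) \<Longrightarrow> y \<in> Delta (Suc (Suc k))
   \<Longrightarrow> bayes (Suc (Suc k)) x y \<Longrightarrow> bayes (Suc (Suc k)) (x \<circ> \<sigma>) (y \<circ> \<sigma>)"
proof (induction k arbitrary: \<sigma> x y)
  case 0
  have x1: "x 1 = 1 - x 0" and y1: "y 1 = 1 - y 0" using "0.prems"(2,3)
    by (simp_all add: Delta_def numeral_2_eq_2 lessThan_Suc)
  have "\<sigma> 0 < 2" using permutes_in_image[OF "0.prems"(1), of 0] by simp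
  then have "\<sigma> 0 = 0 \<or> \<sigma> 0 = 1" by auto
  then show ?case
  proof
    assume "\<sigma> 0 = 0" then show ?case using "0.prems"(4) by simp
  next
    assume "\<sigma> 0 = 1" then show ?case using "0.prems"(4) x1 y1 by simp linarith
  qed
next
  case (Suc k)
  let ?K = "Suc (Suc (Suc k))"
  have s: "\<sigma> permutes {..<?K}" and x: "x \<in> Delta ?K" and y: "y \<in> Delta ?K" using Suc.prems by auto
  show ?case
  proof (simp only: bayes.simps, intro allI impI)
    fix i assume i: "i < ?K"
      and h: "x \<circ> \<sigma> \<in> Delta ?K - {pure i} \<and> y \<circ> \<sigma> \<in> Delta ?K - {pure i}"
    have si: "\<sigma> i < ?K" using permutes_in_image[OF s] i by simp
    have "(x \<circ> \<sigma>) i \<noteq> 1" "(y \<circ> \<sigma>) i \<noteq> 1" using h Delta_pure i by blast+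
    then have xi: "x (\<sigma> i) \<noteq> 1" and yi: "y (\<sigma> i) \<noteq> 1" by simp_all
    have "x \<in> Delta ?K - {pure (\<sigma> i)} \<and> y \<in> Delta ?K - {pure (\<sigma> i)}"
      using x y xi yi Delta_pure si by auto
    then have b: "bayes (Suc (Suc k)) (bproj (Suc (Suc k)) (\<sigma> i) x) (bproj (Suc (Suc k)) (\<sigma> i) y)"
      using Suc.prems(4) si by simp
    have bx: "bproj (Suc (Suc k)) (\<sigma> i) x \<in> Delta (Suc (Suc k))" by (rule bproj_Delta[OF x si xi])
    have by': "bproj (Suc (Suc k)) (\<sigma> i) y \<in> Delta (Suc (Suc k))" by (rule bproj_Delta[OF y si yi])
    show "bayes (Suc (Suc k)) (bproj (Suc (Suc k)) i (x \<circ> \<sigma>)) (bproj (Suc (Suc k)) i (y \<circ> \<sigma>))"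
      unfolding bproj_perm[OF s i]
      by (rule Suc.IH[OF tau_perm[OF s i] bx by' b])
  qed
qed

lemma bayes_perm_iff:
  assumes n: "n \<ge> 2" and s: "\<sigma> permutes {..<n}" and x: "x \<in> Delta n" and y: "y \<in> Delta n"
  shows "bayes n (x \<circ> \<sigma>) (y \<circ> \<sigma>) \<longleftrightarrow> bayes n x y"
proof -
  obtain k where k: "n = Suc (Suc k)" using n by (metis add_2_eq_Suc le_Suc_ex)
  have si: "inv \<sigma> permutes {..<n}" using s by (rule permutes_inv)
  have xx: "x \<circ> \<sigma> \<circ> inv \<sigma> = x" "y \<circ> \<sigma> \<circ> inv \<sigma> = y"
    using permutes_inverses(1)[OF s] by (auto simp: fun_eq_iff)
  show ?thesis
  proof
    assume "bayes n (x \<circ> \<sigma>) (y \<circ> \<sigma>)"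
    then have "bayes n (x \<circ> \<sigma> \<circ> inv \<sigma>) (y \<circ> \<sigma> \<circ> inv \<sigma>)"
      using bayes_perm[of "inv \<sigma>" k "x \<circ> \<sigma>" "y \<circ> \<sigma>"] si Delta_perm[OF s x] Delta_perm[OF s y] k by simp
    then show "bayes n x y" using xx by simp
  next
    assume "bayes n x y"
    then show "bayes n (x \<circ> \<sigma>) (y \<circ> \<sigma>)" using bayes_perm[of \<sigma> k x y] s x y k by simp
  qed
qed



definition enumn :: "nat \<Rightarrow> 'n::finite" where
  "enumn = (SOME b. bij_betw b {..<CARD('n)} (UNIV::'n set))"

definition ixn :: "'n::finite \<Rightarrow> nat" where
  "ixn = inv_into {..<CARD('n)} enumn"

lemma enumn_bij: "bij_betw (enumn :: nat \<Rightarrow> 'n::finite) {..<CARD('n)} UNIV"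
proof -
  have "\<exists>b. bij_betw b {..<CARD('n)} (UNIV::'n set)"
    using ex_bij_betw_nat_finite[of "UNIV::'n set"] by (simp add: atLeast0LessThan)
  then show ?thesis unfolding enumn_def by (rule someI_ex)
qed

lemma ixn_bij: "bij_betw (ixn :: 'n::finite \<Rightarrow> nat) UNIV {..<CARD('n)}"
  unfolding ixn_def by (rule bij_betw_inv_into[OF enumn_bij])

lemma ixn_lt: "ixn (i::'n::finite) < CARD('n)"
  using ixn_bij unfolding bij_betw_def by blast

lemma enumn_ixn: "enumn (ixn (i::'n::finite)) = i"
  unfolding ixn_def using enumn_bij by (meson UNIV_I bij_betw_inv_into_right)

lemma ixn_enumn: "j < CARD('n) \<Longrightarrow> ixn (enumn j :: 'n::finite) = j"
  unfolding ixn_def using enumn_bij by (meson bij_betw_inv_into_left lessThan_iff)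

definition cdiag :: "('n::finite \<Rightarrow> complex) \<Rightarrow> complex^'n^'n" where
  "cdiag g = (\<chi> i j. if i = j then g i else 0)"

lemma ifz: "(if P then a else 0) * b = (if P then a * b else (0::complex))" by simp

lemma cdiag_mult_vec: "cdiag g *v v = (\<chi> i. g i * v$i)"
  by (simp add: cdiag_def matrix_vector_mult_def vec_eq_iff ifz)

lemma cdiag_mult: "cdiag g ** cdiag h = cdiag (\<lambda>i. g i * h i)"
  by (simp add: cdiag_def matrix_matrix_mult_def vec_eq_iff ifz)

lemma cdiag_comm: "cdiag g ** cdiag h = cdiag h ** cdiag g"
  by (simp add: cdiag_mult mult.commute)

lemma adj_cdiag: "adj (cdiag g) = cdiag (\<lambda>i. cnj (g i))"
  by (simp add: adj_def cdiag_def vec_eq_iff)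

lemma trace_cdiag: "trace (cdiag g) = (\<Sum>i\<in>UNIV. g i)"
  by (simp add: trace_def cdiag_def)

lemma mat_spec_cdiag:
  fixes g :: "'n::finite \<Rightarrow> complex"
  shows "mat_spec (cdiag g) = range g"
proof
  show "mat_spec (cdiag g) \<subseteq> range g"
  proof
    fix c assume "c \<in> mat_spec (cdiag g)"
    then obtain v where v: "v \<noteq> 0" "cdiag g *v v = c *s v" unfolding mat_spec_def by blast
    obtain i where i: "v$i \<noteq> 0" using v(1) by (metis vec_eq_iff zero_index)
    have "g i * v$i = c * v$i" using arg_cong[OF v(2), of "\<lambda>w. w$i"] by (simp add: cdiag_mult_vec)
    then have "g i = c" using i by simp
    then show "c \<in> range g" by blast
  qed
  show "range g \<subseteq> mat_spec (cdiag g)"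
  proof
    fix c assume "c \<in> range g"
    then obtain i where i: "c = g i" by blast
    let ?v = "(\<chi> j. if j = i then 1 else 0) :: complex^'n"
    have "?v \<noteq> 0" by (simp add: vec_eq_iff)
    moreover have "cdiag g *v ?v = c *s ?v" by (simp add: cdiag_mult_vec vec_eq_iff i)
    ultimately show "c \<in> mat_spec (cdiag g)" unfolding mat_spec_def by blast
  qed
qed

lemma proj_cdiag:
  fixes g :: "'n::finite \<Rightarrow> complex"
  shows "proj_onto (eigenspace (cdiag g) c) = cdiag (\<lambda>i. if g i = c then 1 else 0)"
proof (rule proj_onto_eq)
  let ?P = "cdiag (\<lambda>i. if g i = c then 1 else 0) :: complex^'n^'n"
  have "range (\<lambda>v. ?P *v v) = eigenspace (cdiag g) c"
  proof
    show "range (\<lambda>v. ?P *v v) \<subseteq> eigenspace (cdiag g) c"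
      by (auto simp: eigenspace_def cdiag_mult_vec vec_eq_iff)
    show "eigenspace (cdiag g) c \<subseteq> range (\<lambda>v. ?P *v v)"
    proof
      fix v assume "v \<in> eigenspace (cdiag g) c"
      then have h: "\<And>i. g i * v$i = c * v$i"
        unfolding eigenspace_def by (simp add: cdiag_mult_vec vec_eq_iff)
      have "?P *v v = v"
      proof (subst vec_eq_iff, intro allI)
        fix i show "(?P *v v)$i = v$i" using h[of i] by (cases "v$i = 0") (auto simp: cdiag_mult_vec)
      qed
      then show "v \<in> range (\<lambda>v. ?P *v v)" by (metis rangeI)
    qed
  qed
  then show "orth_proj_onto (eigenspace (cdiag g) c) ?P"
    unfolding orth_proj_onto_def by (simp add: cdiag_mult adj_cdiag if_distrib cong: if_cong)
qed

lemma mat_fun_cdiag: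
  fixes g :: "'n::finite \<Rightarrow> complex"
  shows "mat_fun f (cdiag g) = cdiag (\<lambda>i. complex_of_real (f (Re (g i))))"
proof -
  have "mat_fun f (cdiag g) = (\<Sum>c\<in>range g. f (Re c) *\<^sub>R cdiag (\<lambda>i. if g i = c then 1 else 0))"
    by (simp add: mat_fun_def mat_spec_cdiag proj_cdiag)
  also have "\<dots> = cdiag (\<lambda>i. complex_of_real (f (Re (g i))))"
  proof (subst vec_eq_iff, intro allI, subst vec_eq_iff, intro allI)
    fix i j
    show "(\<Sum>c\<in>range g. f (Re c) *\<^sub>R cdiag (\<lambda>i. if g i = c then 1 else 0))$i$j
       = cdiag (\<lambda>i. complex_of_real (f (Re (g i))))$i$j"
    proof (cases "i = j")
      case True
      have "(\<Sum>c\<in>range g. f (Re c) *\<^sub>R cdiag (\<lambda>i. if g i = c then 1 else 0))$i$j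
          = (\<Sum>c\<in>range g. f (Re c) *\<^sub>R (if g i = c then 1 else 0 :: complex))"
        using True by (simp add: cdiag_def vector_scaleR_component)
      also have "\<dots> = (\<Sum>c\<in>range g. (if g i = c then complex_of_real (f (Re c)) else 0))"
        by (rule sum.cong) (auto simp: scaleR_conv_of_real)
      also have "\<dots> = complex_of_real (f (Re (g i)))"
        by (subst sum.delta') auto
      finally show ?thesis using True by (simp add: cdiag_def)
    next
      case False
      then show ?thesis by (simp add: cdiag_def)
    qed
  qed
  finally show ?thesis .
qed

definition Phi :: "(nat \<Rightarrow> real) \<Rightarrow> complex^'n::finite^'n" where
  "Phi x = cdiag (\<lambda>i. complex_of_real (x (ixn i)))"

lemma sum_ixn: "(\<Sum>i\<in>(UNIV::'n::finite set). h (ixn i)) = (\<Sum>j<CARD('n). h j)"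
  by (rule sum.reindex_bij_betw[OF ixn_bij])

lemma Phi_density:
  assumes x: "x \<in> Delta CARD('n::finite)"
  shows "(Phi x :: complex^'n^'n) \<in> density_ops"
proof -
  have nn: "0 \<le> x (ixn (i::'n))" for i using x ixn_lt[of i] by (simp add: Delta_def)
  have "hermitian (Phi x :: complex^'n^'n)" by (simp add: hermitian_def Phi_def adj_cdiag)
  moreover have "0 \<le> Re (cinner v ((Phi x :: complex^'n^'n) *v v))" for v
  proof -
    have "Re (cinner v ((Phi x :: complex^'n^'n) *v v)) = (\<Sum>i\<in>UNIV. x (ixn i) * (cmod (v$i))^2)"
    proof -
      have eq: "Re (cinner v ((Phi x :: complex^'n^'n) *v v))
          = (\<Sum>i\<in>UNIV. Re (cnj (v$i) * (complex_of_real (x (ixn i)) * v$i)))"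
        unfolding cinner_def Phi_def cdiag_mult_vec Re_sum vec_lambda_beta ..
      have trm: "Re (cnj (v$i) * (complex_of_real (x (ixn i)) * v$i)) = x (ixn i) * (cmod (v$i))^2" for i
      proof -
        have "cnj (v$i) * (complex_of_real (x (ixn i)) * v$i)
            = complex_of_real (x (ixn i)) * (v$i * cnj (v$i))" by (simp add: mult_ac)
        also have "\<dots> = complex_of_real (x (ixn i)) * complex_of_real ((cmod (v$i))^2)"
          by (simp only: complex_norm_square)
        also have "\<dots> = complex_of_real (x (ixn i) * (cmod (v$i))^2)" by simp
        finally show ?thesis by (metis Re_complex_of_real)
      qed
      show ?thesis unfolding eq by (rule sum.cong[OF refl]) (rule trm)
    qed
    also have "\<dots> \<ge> 0" by (rule sum_nonneg) (simp add: nn)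
    finally show ?thesis .
  qed
  moreover have "trace (Phi x :: complex^'n^'n) = 1"
  proof -
    have "trace (Phi x :: complex^'n^'n) = complex_of_real (\<Sum>i\<in>(UNIV::'n set). x (ixn i))"
      by (simp add: Phi_def trace_cdiag)
    also have "\<dots> = 1" using x by (simp add: sum_ixn Delta_def)
    finally show ?thesis .
  qed
  ultimately show ?thesis unfolding density_ops_def by blast
qed

lemma Phi_entropy:
  "vn_entropy (Phi x :: complex^'n::finite^'n) = shannon CARD('n) x"
proof -
  have "vn_entropy (Phi x :: complex^'n^'n) = - (\<Sum>i\<in>(UNIV::'n set). x (ixn i) * ln (x (ixn i)))"
    by (simp add: vn_entropy_def Phi_def mat_fun_cdiag trace_cdiag Re_sum)
  also have "\<dots> = shannon CARD('n) x" by (simp add: sum_ixn[of "\<lambda>j. x j * ln (x j)"] shannon_def)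
  finally show ?thesis .
qed



lemma unit_eigvec:
  fixes e :: "complex^'n::finite^'n"
  assumes obs: "observable e" and j: "j < CARD('n)"
  shows "\<exists>w. cinner w w = 1 \<and> e *v w = of_nat (Suc j) *s w"
proof -
  obtain v where v: "v \<noteq> 0" "e *v v = of_nat (Suc j) *s v"
    using obs_eigvecs[OF obs, of "Suc j"] j by auto
  define r where "r = (\<Sum>i\<in>UNIV. (cmod (v$i))^2)"
  have cr: "cinner v v = complex_of_real r" unfolding r_def by (rule cinner_self)
  have "r \<ge> 0" unfolding r_def by (rule sum_nonneg) simp
  moreover have "r \<noteq> 0" using cr v(1) cinner_self_eq_0[of v] by auto
  ultimately have rpos: "r > 0" by simp
  define w where "w = complex_of_real (1 / sqrt r) *s v"
  have sp: "sqrt r > 0" using rpos by simp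
  have ss: "sqrt r * sqrt r = r" using rpos by simp
  have "cinner w w = complex_of_real (1 / sqrt r) * (cnj (complex_of_real (1 / sqrt r)) * cinner v v)"
    by (simp only: w_def cinner_scale_left cinner_scale_right)
  also have "\<dots> = complex_of_real (1 / sqrt r * (1 / sqrt r * r))"
    by (simp only: cr complex_cnj_complex_of_real of_real_mult)
  also have "1 / sqrt r * (1 / sqrt r * r) = 1" using sp ss by (simp add: field_simps)
  finally have "cinner w w = 1" by simp
  moreover have "e *v w = of_nat (Suc j) *s w"
    by (simp only: w_def vector_scalar_commute v(2) vector_smult_assoc mult.commute)
  ultimately show ?thesis by blast
qed

lemma spec_perm:
  fixes e :: "complex^'n::finite^'n"
  assumes obs: "observable e"
  shows "\<exists>q. bij_betw q {..<CARD('n)} (UNIV::'n set) \<and>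
     (\<forall>d j. j < CARD('n) \<longrightarrow>
        cdiag (\<lambda>i. complex_of_real (d i)) ** e = e ** cdiag (\<lambda>i. complex_of_real (d i))
        \<longrightarrow> spec_wrt (cdiag (\<lambda>i. complex_of_real (d i))) e j = d (q j))"
proof -
  let ?n = "CARD('n)"
  have "\<forall>j. \<exists>w. j < ?n \<longrightarrow> cinner w w = 1 \<and> e *v w = of_nat (Suc j) *s w"
    using unit_eigvec[OF obs] by blast
  then obtain W where W: "\<And>j. j < ?n \<Longrightarrow> cinner (W j) (W j) = 1 \<and> e *v W j = of_nat (Suc j) *s W j"
    using choice[of "\<lambda>j w. j < ?n \<longrightarrow> cinner w w = 1 \<and> e *v w = of_nat (Suc j) *s w"] by blast
  have herm: "hermitian e" using obs by (simp add: observable_def)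
  have orth: "cinner (W j) (W l) = 0" if "j < ?n" "l < ?n" "j \<noteq> l" for j l
    by (rule eig_orth[OF herm W[OF that(1), THEN conjunct2] W[OF that(2), THEN conjunct2]])
       (simp_all add: that)
  define V :: "complex^'n^'n" where "V = (\<chi> l i. (W (ixn l))$i)"
  have "V ** adj V = mat 1"
  proof (subst vec_eq_iff, intro allI, subst vec_eq_iff, intro allI)
    fix l m :: 'n
    have "(V ** adj V)$l$m = cinner (W (ixn m)) (W (ixn l))"
      by (simp add: V_def adj_def matrix_matrix_mult_def cinner_def mult.commute)
    also have "\<dots> = (if l = m then 1 else 0)"
    proof (cases "l = m")
      case True then show ?thesis using W[OF ixn_lt[of m]] by simp
    next
      case False
      then have "ixn m \<noteq> ixn l" by (metis enumn_ixn)
      then show ?thesis using orth[OF ixn_lt ixn_lt] False by simp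
    qed
    finally show "(V ** adj V)$l$m = mat 1 $ l $ m" by (simp add: mat_def)
  qed
  then have "det V * det (adj V) = 1" by (metis det_mul det_I)
  then have "det V \<noteq> 0" by auto
  then have "\<exists>p\<in>{p. p permutes (UNIV::'n set)}. of_int (sign p) * (\<Prod>l\<in>UNIV. V$l$(p l)) \<noteq> 0"
    unfolding det_def by (meson sum.neutral)
  then obtain p where p: "p permutes (UNIV::'n set)" "(\<Prod>l\<in>UNIV. V$l$(p l)) \<noteq> 0" by auto
  have nz: "(W (ixn l))$(p l) \<noteq> 0" for l
  proof -
    have "V$l$(p l) \<noteq> 0" using p(2) by (metis UNIV_I finite prod_zero_iff)
    then show ?thesis by (simp add: V_def)
  qed
  define q where "q = p \<circ> enumn"
  have qbij: "bij_betw q {..<?n} (UNIV::'n set)"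
    unfolding q_def by (rule bij_betw_trans[OF enumn_bij permutes_imp_bij[OF p(1)]])
  have Wq: "(W j)$(q j) \<noteq> 0" if "j < ?n" for j
    using nz[of "enumn j"] that by (simp add: q_def ixn_enumn)
  have main: "spec_wrt (cdiag (\<lambda>i. complex_of_real (d i))) e j = d (q j)"
    if j: "j < ?n" and comm: "cdiag (\<lambda>i. complex_of_real (d i)) ** e = e ** cdiag (\<lambda>i. complex_of_real (d i))"
    for d j
  proof -
    let ?D = "cdiag (\<lambda>i. complex_of_real (d i)) :: complex^'n^'n"
    have Wj: "cinner (W j) (W j) = 1" "e *v W j = of_nat (Suc j) *s W j" using W[OF j] by auto
    have Wnz: "W j \<noteq> 0" using Wj(1) by (rule cinner_unit_nz)
    have "e *v (?D *v W j) = (e ** ?D) *v W j" by (simp add: matrix_vector_mul_assoc)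
    also have "\<dots> = ?D *v (e *v W j)" using comm by (simp add: matrix_vector_mul_assoc)
    also have "\<dots> = of_nat (Suc j) *s (?D *v W j)" by (simp only: Wj(2) vector_scalar_commute)
    finally have "e *v (?D *v W j) = of_nat (Suc j) *s (?D *v W j)" .
    then obtain t where t: "?D *v W j = t *s W j" using obs_eig_simple[OF obs Wnz Wj(2)] by blast
    have "complex_of_real (d (q j)) * (W j)$(q j) = t * (W j)$(q j)"
      using arg_cong[OF t, of "\<lambda>v. v$(q j)"] by (simp add: cdiag_mult_vec)
    then have tq: "t = complex_of_real (d (q j))" using Wq[OF j] by simp
    have "spec_wrt ?D e j = Re (cinner (W j) (?D *v W j))" by (rule spec_wrt_eig[OF obs Wj j])
    also have "\<dots> = d (q j)" by (simp add: t cinner_scale_right Wj(1) tq)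
    finally show ?thesis .
  qed
  show ?thesis using qbij main by blast
qed

definition e0 :: "complex^'n::finite^'n" where
  "e0 = cdiag (\<lambda>i. of_nat (Suc (ixn i)))"

lemma e0_obs: "observable (e0 :: complex^'n::finite^'n)"
proof -
  have "hermitian (e0 :: complex^'n^'n)" by (simp add: hermitian_def e0_def adj_cdiag)
  moreover have "mat_spec (e0 :: complex^'n^'n) = of_nat ` {1..CARD('n)}"
  proof -
    have r: "range (ixn :: 'n \<Rightarrow> nat) = {..<CARD('n)}" by (rule bij_betw_imp_surj_on[OF ixn_bij])
    have "mat_spec (e0 :: complex^'n^'n) = (\<lambda>j. of_nat (Suc j)) ` range (ixn :: 'n \<Rightarrow> nat)"
      by (simp add: e0_def mat_spec_cdiag image_comp comp_def)
    also have "\<dots> = of_nat ` (Suc ` {..<CARD('n)})" by (simp add: r image_comp comp_def)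
    also have "\<dots> = of_nat ` {1..CARD('n)}" by (simp add: image_Suc_lessThan)
    finally show ?thesis .
  qed
  ultimately show ?thesis by (simp add: observable_def)
qed

lemma spec_e0:
  assumes x: "x \<in> Delta CARD('n::finite)"
  shows "spec_wrt (Phi x :: complex^'n^'n) (e0 :: complex^'n^'n) = x"
proof
  fix j
  show "spec_wrt (Phi x :: complex^'n^'n) (e0 :: complex^'n^'n) j = x j"
  proof (cases "j < CARD('n)")
    case True
    define w :: "complex^'n" where "w = (\<chi> i. if i = enumn j then 1 else 0)"
    have w1: "cinner w w = 1" by (simp add: w_def cinner_def if_distrib cong: if_cong)
    have we: "e0 *v w = of_nat (Suc j) *s w"
      by (auto simp: e0_def cdiag_mult_vec w_def vec_eq_iff ixn_enumn[OF True])
    have "spec_wrt (Phi x :: complex^'n^'n) (e0 :: complex^'n^'n) j = Re (cinner w ((Phi x :: complex^'n^'n) *v w))"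
      by (rule spec_wrt_eig[OF e0_obs w1 we True])
    also have "\<dots> = x j"
      by (simp add: w_def cinner_def Phi_def cdiag_mult_vec if_distrib ixn_enumn[OF True] cong: if_cong)
    finally show ?thesis .
  next
    case False
    then show ?thesis using x by (simp add: spec_wrt_def Delta_def)
  qed
qed

lemma part1:
  assumes n: "CARD('n::finite) \<ge> 2"
  shows "order_embedding (Delta CARD('n)) (bayes CARD('n)) density_ops spectral_le (Phi :: _ \<Rightarrow> complex^'n^'n)
        \<and> (\<forall>x\<in>Delta CARD('n). vn_entropy (Phi x :: complex^'n^'n) = shannon CARD('n) x)"
proof -
  let ?n = "CARD('n)"
  have eq: "bayes ?n x y \<longleftrightarrow> spectral_le (Phi x :: complex^'n^'n) (Phi y)"
    if x: "x \<in> Delta ?n" and y: "y \<in> Delta ?n" for x y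
  proof
    assume b: "bayes ?n x y"
    show "spectral_le (Phi x :: complex^'n^'n) (Phi y)"
      unfolding spectral_le_def
    proof (intro exI conjI)
      show "observable (e0 :: complex^'n^'n)" by (rule e0_obs)
      show "(Phi x :: complex^'n^'n) ** e0 = e0 ** Phi x" by (simp add: Phi_def e0_def cdiag_comm)
      show "(Phi y :: complex^'n^'n) ** e0 = e0 ** Phi y" by (simp add: Phi_def e0_def cdiag_comm)
      show "bayes ?n (spec_wrt (Phi x :: complex^'n^'n) e0) (spec_wrt (Phi y :: complex^'n^'n) e0)"
        using b by (simp add: spec_e0[OF x] spec_e0[OF y])
    qed
  next
    assume "spectral_le (Phi x :: complex^'n^'n) (Phi y)"
    then obtain e :: "complex^'n^'n" where obs: "observable e"
      and cx: "Phi x ** e = e ** Phi x" and cy: "Phi y ** e = e ** Phi y"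
      and b: "bayes ?n (spec_wrt (Phi x) e) (spec_wrt (Phi y) e)"
      unfolding spectral_le_def by blast
    obtain q where qbij: "bij_betw q {..<?n} (UNIV::'n set)" and
      qs: "\<And>d j. j < ?n \<Longrightarrow>
        cdiag (\<lambda>i. complex_of_real (d i)) ** e = e ** cdiag (\<lambda>i. complex_of_real (d i))
        \<Longrightarrow> spec_wrt (cdiag (\<lambda>i. complex_of_real (d i))) e j = d (q j)"
      using spec_perm[OF obs] by blast
    define \<sigma> where "\<sigma> j = (if j < ?n then ixn (q j) else j)" for j
    have "bij_betw (ixn \<circ> q) {..<?n} {..<?n}" by (rule bij_betw_trans[OF qbij ixn_bij])
    then have "bij_betw \<sigma> {..<?n} {..<?n}" by (subst bij_betw_cong[where g = "ixn \<circ> q"]) (auto simp: \<sigma>_def)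
    then have sp: "\<sigma> permutes {..<?n}" by (rule bij_imp_permutes) (simp add: \<sigma>_def)
    have sx: "spec_wrt (Phi z :: complex^'n^'n) e = z \<circ> \<sigma>"
      if z: "z \<in> Delta ?n" and cz: "Phi z ** e = e ** Phi z" for z
    proof
      fix j show "spec_wrt (Phi z :: complex^'n^'n) e j = (z \<circ> \<sigma>) j"
      proof (cases "j < ?n")
        case True
        then show ?thesis using qs[of j "\<lambda>i. z (ixn i)"] cz by (simp add: Phi_def \<sigma>_def)
      next
        case False
        then show ?thesis using z by (simp add: spec_wrt_def \<sigma>_def Delta_def)
      qed
    qed
    have "bayes ?n (x \<circ> \<sigma>) (y \<circ> \<sigma>)" using b sx[OF x cx] sx[OF y cy] by simp
    then show "bayes ?n x y" using bayes_perm_iff[OF n sp x y] by simp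
  qed
  show ?thesis
    unfolding order_embedding_def using Phi_density eq Phi_entropy by blast
qed

theorem mainTheorem1:
  assumes "CARD('n::finite) \<ge> 2"
  shows "(\<exists>\<phi> :: (nat \<Rightarrow> real) \<Rightarrow> complex^'n^'n.
            order_embedding (Delta CARD('n)) (bayes CARD('n)) density_ops spectral_le \<phi>
            \<and> (\<forall>x\<in>Delta CARD('n). vn_entropy (\<phi> x) = shannon CARD('n) x))
       \<and> (\<forall>m\<ge>2. \<not> (\<exists>\<phi> :: complex^'n^'n \<Rightarrow> (nat \<Rightarrow> real).
            order_embedding density_ops spectral_le (Delta m) (bayes m) \<phi>
            \<and> (\<forall>\<rho>\<in>density_ops. shannon m (\<phi> \<rho>) = vn_entropy \<rho>)))"
proof
  show "\<exists>\<phi> :: (nat \<Rightarrow> real) \<Rightarrow> complex^'n^'n.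
            order_embedding (Delta CARD('n)) (bayes CARD('n)) density_ops spectral_le \<phi>
            \<and> (\<forall>x\<in>Delta CARD('n). vn_entropy (\<phi> x) = shannon CARD('n) x)"
    using part1[OF assms] by blast
  show "\<forall>m\<ge>2. \<not> (\<exists>\<phi> :: complex^'n^'n \<Rightarrow> (nat \<Rightarrow> real).
            order_embedding density_ops spectral_le (Delta m) (bayes m) \<phi>
            \<and> (\<forall>\<rho>\<in>density_ops. shannon m (\<phi> \<rho>) = vn_entropy \<rho>))"
    using part2[OF assms] by blast
qed

end
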